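(* Let $k$ be a field and let $V_\bullet$ be a complex of finite dimensional $k$-vector spaces, indexed cohomologically (differential $d_i:V_i\to V_{i+1}$, $i\in\mathbb{Z}$). Call a finite interval $S=[M,N]\subset\mathbb{Z}$ a stretch if it is maximal (among finite intervals) with respect to the property that $d_i\neq 0$ whenever $i,i+1\in S$. Let $\{T_i\}_{i\in\mathbb{Z}}$ be scalars in $k$ such that $\sum_{i\in S}(-1)^iT_i=0$ for every stretch $S$ of $V_\bullet$. Then there exists a null-homotopic chain map $\tau_\bullet:V_\bullet\to V_\bullet$ such that $\operatorname{tr}(\tau_i)=T_i$ for every $i\in\mathbb{Z}$.
   Context: $\operatorname{tr}$ denotes the trace of an endomorphism of a finite dimensional vector space. A chain map is null-homotopic if it is chain homotopic to the zero map. *)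

theory Defs
  imports "Jordan_Normal_Form.Matrix"
begin

text \<open>A complex of finite dimensional k-vector spaces, indexed cohomologically by int:
  V_i = k^(n i) (after choosing bases), differential d_i : V_i -> V_(i+1) given by a
  (n (i+1)) x (n i) matrix.\<close>

definition is_complex :: "(int \<Rightarrow> nat) \<Rightarrow> (int \<Rightarrow> 'k::field mat) \<Rightarrow> bool" where
  "is_complex n d \<longleftrightarrow>
     (\<forall>i. d i \<in> carrier_mat (n (i+1)) (n i)) \<and>
     (\<forall>i. d (i+1) * d i = 0\<^sub>m (n (i+2)) (n i))"

definition mat_trace :: "'k::field mat \<Rightarrow> 'k" where
  "mat_trace A = (\<Sum>i<dim_row A. A $$ (i,i))"

definition finite_interval :: "int set \<Rightarrow> bool" where
  "finite_interval S \<longleftrightarrow> (\<exists>M N. S = {M..N})"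

definition stretch_prop :: "(int \<Rightarrow> 'k::field mat) \<Rightarrow> int set \<Rightarrow> bool" where
  "stretch_prop d S \<longleftrightarrow> (\<forall>i. i \<in> S \<and> i+1 \<in> S \<longrightarrow> d i \<noteq> 0\<^sub>m (dim_row (d i)) (dim_col (d i)))"

definition is_stretch :: "(int \<Rightarrow> 'k::field mat) \<Rightarrow> int set \<Rightarrow> bool" where
  "is_stretch d S \<longleftrightarrow> finite_interval S \<and> stretch_prop d S \<and>
     (\<forall>S'. finite_interval S' \<and> stretch_prop d S' \<and> S \<subseteq> S' \<longrightarrow> S' = S)"

definition chain_map :: "(int \<Rightarrow> nat) \<Rightarrow> (int \<Rightarrow> 'k::field mat) \<Rightarrow> (int \<Rightarrow> 'k mat) \<Rightarrow> bool" where
  "chain_map n d \<tau> \<longleftrightarrow>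
     (\<forall>i. \<tau> i \<in> carrier_mat (n i) (n i)) \<and> (\<forall>i. d i * \<tau> i = \<tau> (i+1) * d i)"

definition null_homotopic :: "(int \<Rightarrow> nat) \<Rightarrow> (int \<Rightarrow> 'k::field mat) \<Rightarrow> (int \<Rightarrow> 'k mat) \<Rightarrow> bool" where
  "null_homotopic n d \<tau> \<longleftrightarrow>
     (\<exists>h. (\<forall>i. h i \<in> carrier_mat (n (i-1)) (n i)) \<and>
          (\<forall>i. \<tau> i = d (i-1) * h i + h (i+1) * d i))"

end

theory Submission
  imports Defs
begin

lemma trace_single:
  fixes A :: "'k::field mat"
  assumes A: "A \<in> carrier_mat m k" and c: "c < k" and r: "r < m"
  shows "mat_trace (A * mat k m (\<lambda>(q,p). if q = c \<and> p = r then v else 0)) = A $$ (r,c) * v"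
    and "mat_trace (mat k m (\<lambda>(q,p). if q = c \<and> p = r then v else 0) * A) = v * A $$ (r,c)"
proof -
  let ?B = "mat k m (\<lambda>(q,p). if q = c \<and> p = r then v else 0)"
  have e1: "(A * ?B) $$ (p,p) = (if p = r then A $$ (r,c) * v else 0)" if "p < m" for p
  proof -
    have "(A * ?B) $$ (p,p) = (\<Sum>q\<in>{0..<k}. A $$ (p,q) * (if q = c \<and> p = r then v else 0))"
      using A that by (simp add: scalar_prod_def)
    also have "\<dots> = (\<Sum>q\<in>{0..<k}. if q = c then (if p = r then A $$ (p,q) * v else 0) else 0)"
      by (rule sum.cong) auto
    also have "\<dots> = (if p = r then A $$ (r,c) * v else 0)" using c by (simp add: sum.delta)
    finally show ?thesis .
  qed
  have "mat_trace (A * ?B) = (\<Sum>p<m. if p = r then A $$ (r,c) * v else 0)"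
    unfolding mat_trace_def using A e1 by (auto intro: sum.cong)
  also have "\<dots> = A $$ (r,c) * v" using r by (simp add: sum.delta)
  finally show "mat_trace (A * ?B) = A $$ (r,c) * v" .
  have e2: "(?B * A) $$ (q,q) = (if q = c then v * A $$ (r,c) else 0)" if "q < k" for q
  proof -
    have "(?B * A) $$ (q,q) = (\<Sum>p\<in>{0..<m}. (if q = c \<and> p = r then v else 0) * A $$ (p,q))"
      using A that by (simp add: scalar_prod_def)
    also have "\<dots> = (\<Sum>p\<in>{0..<m}. if p = r then (if q = c then v * A $$ (p,q) else 0) else 0)"
      by (rule sum.cong) auto
    also have "\<dots> = (if q = c then v * A $$ (r,c) else 0)" using r by (simp add: sum.delta)
    finally show ?thesis .
  qed
  have "mat_trace (?B * A) = (\<Sum>q<k. if q = c then v * A $$ (r,c) else 0)"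
    unfolding mat_trace_def using A e2 by (auto intro: sum.cong)
  also have "\<dots> = v * A $$ (r,c)" using c by (simp add: sum.delta)
  finally show "mat_trace (?B * A) = v * A $$ (r,c)" .
qed

lemma trace_zero_left:
  fixes A :: "'k::field mat"
  assumes "A \<in> carrier_mat m k"
  shows "mat_trace (0\<^sub>m k m * A) = 0" "mat_trace (A * 0\<^sub>m k m) = 0"
  using assms by (auto simp: mat_trace_def scalar_prod_def)

lemma trace_add:
  fixes A :: "'k::field mat"
  assumes "A \<in> carrier_mat m m" "B \<in> carrier_mat m m"
  shows "mat_trace (A + B) = mat_trace A + mat_trace B"
  using assms by (simp add: mat_trace_def sum.distrib)

lemma sgn_alt: "((-1::'a::ring_1) ^ nat \<bar>i\<bar>) = (if even i then 1 else -1)"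
proof -
  have "even (nat \<bar>i\<bar>) = even i" by (simp add: even_nat_iff)
  then show ?thesis by (simp add: minus_one_power_iff)
qed

definition Pf :: "(int \<Rightarrow> 'k::field) \<Rightarrow> int \<Rightarrow> 'k" where
  "Pf U i = (if 0 \<le> i then (\<Sum>j\<in>{1..i}. U j) else - (\<Sum>j\<in>{i+1..0}. U j))"

lemma Pf_step: "Pf U i = Pf U (i-1) + U i"
proof (cases "0 < i")
  case True
  then have "{1..i} = insert i {1..i-1}" by auto
  then show ?thesis using True by (simp add: Pf_def)
next
  case False
  show ?thesis
  proof (cases "i = 0")
    case True then show ?thesis by (simp add: Pf_def)
  next
    case F2: False
    then have "{i..0} = insert i {i+1..0}" using False by auto
    then show ?thesis using False F2 by (simp add: Pf_def)
  qed
qed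

lemma Pf_diff: "z \<le> z' \<Longrightarrow> (\<Sum>j\<in>{z+1..z'}. U j) = Pf U z' - Pf U z"
proof (induction z' rule: int_ge_induct)
  case base then show ?case by simp
next
  case (step w)
  have "{z+1..w+1} = insert (w+1) {z+1..w}" using step.hyps by auto
  then show ?case using step Pf_step[of U "w+1"] by simp
qed

abbreviation iszero :: "(int \<Rightarrow> 'k::field mat) \<Rightarrow> int \<Rightarrow> bool" where
  "iszero d i \<equiv> d i = 0\<^sub>m (dim_row (d i)) (dim_col (d i))"

lemma block_stretch:
  assumes "iszero d z" "iszero d z'" "z < z'" "\<And>w. z < w \<Longrightarrow> w < z' \<Longrightarrow> \<not> iszero d w"
  shows "is_stretch d {z+1..z'}"
  unfolding is_stretch_def
proof (intro conjI allI impI)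
  show "finite_interval {z+1..z'}" unfolding finite_interval_def by blast
  show "stretch_prop d {z+1..z'}" unfolding stretch_prop_def using assms(4) by auto
  fix S' assume H: "finite_interval S' \<and> stretch_prop d S' \<and> {z + 1..z'} \<subseteq> S'"
  then obtain M N where S': "S' = {M..N}" unfolding finite_interval_def by blast
  have MN: "M \<le> z+1" "z' \<le> N" using H S' assms(3) by auto
  have "\<not> M \<le> z"
  proof
    assume "M \<le> z"
    then have "z \<in> S'" "z+1 \<in> S'" using S' MN assms(3) by auto
    then show False using H assms(1) unfolding stretch_prop_def by blast
  qed
  moreover have "\<not> z' + 1 \<le> N"
  proof
    assume "z'+1 \<le> N"
    then have "z' \<in> S'" "z'+1 \<in> S'" using S' MN assms(3) by auto
    then show False using H assms(2) unfolding stretch_prop_def by blast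
  qed
  ultimately have "M = z+1" "N = z'" using MN by auto
  then show "S' = {z+1..z'}" using S' by simp
qed

lemma zeros_equal:
  fixes d :: "int \<Rightarrow> 'k::field mat" and T :: "int \<Rightarrow> 'k"
  assumes hyp: "\<And>S. is_stretch d S \<Longrightarrow> (\<Sum>i\<in>S. (-1) ^ nat \<bar>i\<bar> * T i) = 0"
  shows "iszero d z \<Longrightarrow> iszero d z' \<Longrightarrow> z < z' \<Longrightarrow>
    Pf (\<lambda>i. (-1) ^ nat \<bar>i\<bar> * T i) z = Pf (\<lambda>i. (-1) ^ nat \<bar>i\<bar> * T i) z'"
proof (induction "nat (z' - z)" arbitrary: z z' rule: less_induct)
  case less
  show ?case
  proof (cases "\<exists>w. z < w \<and> w < z' \<and> iszero d w")
    case True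
    then obtain w where w: "z < w" "w < z'" "iszero d w" by blast
    have "Pf (\<lambda>i. (-1) ^ nat \<bar>i\<bar> * T i) z = Pf (\<lambda>i. (-1) ^ nat \<bar>i\<bar> * T i) w"
      using less.hyps[of w] less.prems w by auto
    also have "\<dots> = Pf (\<lambda>i. (-1) ^ nat \<bar>i\<bar> * T i) z'"
      using less.hyps[of z' w] less.prems w by auto
    finally show ?thesis .
  next
    case False
    then have "is_stretch d {z+1..z'}" using block_stretch[of d z z'] less.prems by auto
    then have "(\<Sum>i\<in>{z+1..z'}. (-1) ^ nat \<bar>i\<bar> * T i) = 0" using hyp by blast
    moreover have "(\<Sum>i\<in>{z+1..z'}. (-1) ^ nat \<bar>i\<bar> * T i)
       = Pf (\<lambda>i. (-1) ^ nat \<bar>i\<bar> * T i) z' - Pf (\<lambda>i. (-1) ^ nat \<bar>i\<bar> * T i) z"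
      using Pf_diff[of z z'] less.prems by simp
    ultimately show ?thesis by simp
  qed
qed

theorem lemmaB:
  fixes n :: "int \<Rightarrow> nat" and d :: "int \<Rightarrow> 'k::field mat" and T :: "int \<Rightarrow> 'k"
  assumes "is_complex n d"
    and "\<And>S. is_stretch d S \<Longrightarrow> (\<Sum>i\<in>S. (-1) ^ nat \<bar>i\<bar> * T i) = 0"
  shows "\<exists>\<tau>. chain_map n d \<tau> \<and> null_homotopic n d \<tau> \<and> (\<forall>i. mat_trace (\<tau> i) = T i)"
proof -
  let ?U = "\<lambda>i. (-1::'k) ^ nat \<bar>i\<bar> * T i"
  define C where "C = (if \<exists>z. iszero d z then Pf ?U (SOME z. iszero d z) else 0)"
  define a where "a i = (-1) ^ nat \<bar>i\<bar> * (Pf ?U i - C)" for i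
  have a0: "a i = 0" if "iszero d i" for i
  proof -
    have ex: "\<exists>z. iszero d z" using that by blast
    let ?z = "SOME z. iszero d z"
    have z: "iszero d ?z" using someI_ex[OF ex] .
    have "Pf ?U i = Pf ?U ?z"
    proof -
      consider "i < ?z" | "i = ?z" | "?z < i" by linarith
      then show ?thesis
      proof cases
        case 1 then show ?thesis using zeros_equal[of d T i ?z] assms(2) that z by blast
      next
        case 3 then show ?thesis using zeros_equal[of d T ?z i] assms(2) that z by metis
      qed simp
    qed
    then show ?thesis unfolding a_def C_def using ex by simp
  qed
  have aT: "a (i-1) + a i = T i" for i
  proof -
    have e: "even (i-1) \<longleftrightarrow> \<not> even i" by simp
    have "a (i-1) + a i = (-1) ^ nat \<bar>i\<bar> * (Pf ?U i - Pf ?U (i-1))"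
      unfolding a_def sgn_alt[of "i-1"] sgn_alt[of i] using e by (auto simp: algebra_simps)
    also have "\<dots> = (-1) ^ nat \<bar>i\<bar> * ((-1) ^ nat \<bar>i\<bar> * T i)" using Pf_step[of ?U i] by simp
    also have "\<dots> = T i" unfolding sgn_alt[of i] by simp
    finally show ?thesis .
  qed
  have dc: "d i \<in> carrier_mat (n(i+1)) (n i)" for i using assms(1) unfolding is_complex_def by blast
  have dd: "d (i+1) * d i = 0\<^sub>m (n(i+2)) (n i)" for i using assms(1) unfolding is_complex_def by blast
  define rc where "rc i = (SOME p. fst p < n(i+1) \<and> snd p < n i \<and> d i $$ p \<noteq> 0)" for i
  define g where "g i = (if iszero d i then 0\<^sub>m (n i) (n(i+1)) else
     mat (n i) (n(i+1)) (\<lambda>(q,p). if q = snd (rc i) \<and> p = fst (rc i) then a i / d i $$ rc i else 0))" for i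
  have gc: "g i \<in> carrier_mat (n i) (n (i+1))" for i unfolding g_def by auto
  have gt: "mat_trace (g i * d i) = a i \<and> mat_trace (d i * g i) = a i" for i
  proof (cases "iszero d i")
    case True
    then show ?thesis using a0[OF True] trace_zero_left[OF dc[of i]] unfolding g_def by simp
  next
    case False
    have "\<exists>p. fst p < n(i+1) \<and> snd p < n i \<and> d i $$ p \<noteq> 0"
    proof (rule ccontr)
      assume "\<not> ?thesis"
      then have "d i = 0\<^sub>m (dim_row (d i)) (dim_col (d i))" using dc[of i]
        by (intro eq_matI) auto
      then show False using False by blast
    qed
    then have p: "fst (rc i) < n(i+1)" "snd (rc i) < n i" "d i $$ rc i \<noteq> 0"
      unfolding rc_def by (metis (mono_tags, lifting) someI_ex)+
    have gi: "g i = mat (n i) (n(i+1)) (\<lambda>(q,p). if q = snd (rc i) \<and> p = fst (rc i) then a i / d i $$ rc i else 0)"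
      using False unfolding g_def by simp
    have rr: "rc i = (fst (rc i), snd (rc i))" by simp
    show ?thesis
      using trace_single[OF dc[of i] p(2) p(1), of "a i / d i $$ rc i"] p(3) unfolding gi
      by (metis rr nonzero_divide_eq_eq mult.commute)
  qed
  define h where "h i = g (i-1)" for i
  define \<tau> where "\<tau> i = d (i-1) * h i + h (i+1) * d i" for i
  have dc': "d (i-1) \<in> carrier_mat (n i) (n (i-1))" for i using dc[of "i-1"] by simp
  have gc': "g (i-1) \<in> carrier_mat (n (i-1)) (n i)" for i using gc[of "i-1"] by simp
  have dd': "d i * d (i-1) = 0\<^sub>m (n (i+1)) (n (i-1))" for i
  proof -
    have "i - 1 + 1 = i" "i - 1 + 2 = i + 1" by simp_all
    then show ?thesis using dd[of "i-1"] by metis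
  qed
  have tau: "\<tau> i = d (i-1) * g (i-1) + g i * d i" for i unfolding \<tau>_def h_def by simp
  have tc: "\<tau> i \<in> carrier_mat (n i) (n i)" for i
    unfolding tau using dc'[of i] gc'[of i] dc[of i] gc[of i] by auto
  have chain: "d i * \<tau> i = \<tau> (i+1) * d i" for i
  proof -
    have "d i * \<tau> i = d i * (d (i-1) * g (i-1)) + d i * (g i * d i)"
      unfolding tau using dc'[of i] gc'[of i] dc[of i] gc[of i]
      by (intro mult_add_distrib_mat) auto
    also have "d i * (d (i-1) * g (i-1)) = (d i * d (i-1)) * g (i-1)"
      using dc'[of i] gc'[of i] dc[of i] by simp
    also have "\<dots> = 0\<^sub>m (n (i+1)) (n i)" unfolding dd' using gc'[of i] by simp
    finally have L: "d i * \<tau> i = d i * g i * d i"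
      using dc[of i] gc[of i] by simp
    have t1: "\<tau> (i+1) = d i * g i + g (i+1) * d (i+1)" unfolding tau by simp
    have "\<tau> (i+1) * d i = (d i * g i) * d i + (g (i+1) * d (i+1)) * d i"
      unfolding t1 using dc[of i] gc[of i] dc[of "i+1"] gc[of "i+1"]
      by (intro add_mult_distrib_mat) (auto simp: add.commute)
    also have "(g (i+1) * d (i+1)) * d i = g (i+1) * (d (i+1) * d i)"
      using dc[of i] gc[of "i+1"] dc[of "i+1"] by (simp add: add.commute)
    also have "\<dots> = 0\<^sub>m (n (i+1)) (n i)" unfolding dd using gc[of "i+1"] by (simp add: add.commute)
    finally have R: "\<tau> (i+1) * d i = d i * g i * d i"
      using dc[of i] gc[of i] by simp
    show ?thesis using L R by simp
  qed
  have trace: "mat_trace (\<tau> i) = T i" for i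
  proof -
    have "mat_trace (\<tau> i) = mat_trace (d (i-1) * g (i-1)) + mat_trace (g i * d i)"
      unfolding tau using dc'[of i] gc'[of i] dc[of i] gc[of i] by (intro trace_add) auto
    also have "\<dots> = a (i-1) + a i" using gt[of "i-1"] gt[of i] by simp
    finally show ?thesis using aT by simp
  qed
  have "chain_map n d \<tau>" unfolding chain_map_def using tc chain by blast
  moreover have "null_homotopic n d \<tau>" unfolding null_homotopic_def
  proof (intro exI[of _ h] conjI allI)
    fix i show "h i \<in> carrier_mat (n (i - 1)) (n i)" unfolding h_def using gc'[of i] .
    show "\<tau> i = d (i - 1) * h i + h (i + 1) * d i" unfolding \<tau>_def ..
  qed
  ultimately show ?thesis using trace by blast
qed

end
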